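(* For \(i=1,2\), let \(X_i\) be a nonempty set and \(\Phi_i\) a mapping with domain \(X_i^{2}\). Suppose that \(\preccurlyeq_{1} := u_{\Phi_1}^{t} \cup \Delta_{\Phi_1(X_1^{2})}\) and \(\preccurlyeq_{2} := u_{\Phi_2}^{t} \cup \Delta_{\Phi_2(X_2^{2})}\) are partial orders on \(\Phi_1(X_1^{2})\) and on \(\Phi_2(X_2^{2})\), respectively, and that \(\Phi_i\) is a \(\preccurlyeq_{i}\)-pseudoultrametric for \(i = 1, 2\). Then for every mapping \(g \colon X_1 \to X_2\) the following are equivalent: (i) \(g\) is a weak similarity for \(\Phi_1\) and \(\Phi_2\); (ii) \(g\) is a combinatorial similarity for \(\Phi_1\) and \(\Phi_2\).
   Context: For a mapping \(F\) with domain \(A\), \(F(A)\) denotes its range; \(\Delta_S=\{\langle s,s\rangle:s\in S\}\). For \(\Phi\) with domain \(X^2\) and \(Y=\Phi(X^2)\), \(\langle y_1,y_2\rangle\in u_\Phi\) iff \(y_1,y_2\in Y\) and there are \(x_1,x_2,x_3\in X\) with \(y_1=\Phi(x_1,x_3)\), \(y_2=\Phi(x_1,x_2)=\Phi(x_2,x_3)\); \(\gamma^t=\bigcup_{n\ge1}\gamma^n\) is the transitive closure (\(\gamma^{n+1}=\gamma^n\circ\gamma\), \(\langle x,y\rangle\in\alpha\circ\beta\) iff \(\exists z\): \(\langle x,z\rangle\in\alpha,\langle z,y\rangle\in\beta\)). For a poset \((Q,\preccurlyeq_Q)\) with smallest element \(q_0\), \(d\colon Z^2\to Q\) is a \(\preccurlyeq_Q\)-pseudoultrametric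 if \(d\) is symmetric, \(d(z,z)=q_0\) for all \(z\), and for every triple \(\langle z_1,z_2,z_3\rangle\) in \(Z\) there is a permutation \((i_1,i_2,i_3)\) of \((1,2,3)\) with \(d(z_{i_1},z_{i_3})\preccurlyeq_Q d(z_{i_1},z_{i_2})=d(z_{i_2},z_{i_3})\). A mapping \(g\colon X_1\to X_2\) is a combinatorial similarity for \(\Phi_1\) and \(\Phi_2\) if \(g\) is a bijection and there is a bijection \(f\colon\Phi_2(X_2^2)\to\Phi_1(X_1^2)\) with \(\Phi_1(x,y)=f(\Phi_2(g(x),g(y)))\) for all \(x,y\in X_1\). It is a weak similarity for \(\Phi_1\) and \(\Phi_2\) (viewed as \(\preccurlyeq_i\)-valued) if \(g\) is a bijection and there is such an \(f\) which is moreover an order isomorphism between the posets \((\Phi_2(X_2^2),\preccurlyeq_2)\) and \((\Phi_1(X_1^2),\preccurlyeq_1)\). *)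

theory Defs
  imports "HOL-Combinatorics.Permutations"
begin

text \<open>A mapping Phi with domain X^2 is modelled by a curried function, only its
values on X are relevant.\<close>

definition rng :: "'a set \<Rightarrow> ('a \<Rightarrow> 'a \<Rightarrow> 'b) \<Rightarrow> 'b set" where
  "rng X Phi = {Phi x y | x y. x \<in> X \<and> y \<in> X}"

definition u_rel :: "'a set \<Rightarrow> ('a \<Rightarrow> 'a \<Rightarrow> 'b) \<Rightarrow> ('b \<times> 'b) set" where
  "u_rel X Phi = {(y1, y2). y1 \<in> rng X Phi \<and> y2 \<in> rng X Phi \<and>
     (\<exists>x1\<in>X. \<exists>x2\<in>X. \<exists>x3\<in>X. y1 = Phi x1 x3 \<and> y2 = Phi x1 x2 \<and> Phi x1 x2 = Phi x2 x3)}"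

definition ord_rel :: "'a set \<Rightarrow> ('a \<Rightarrow> 'a \<Rightarrow> 'b) \<Rightarrow> ('b \<times> 'b) set" where
  "ord_rel X Phi = (u_rel X Phi)\<^sup>+ \<union> Id_on (rng X Phi)"

definition pseudoultrametric ::
  "'a set \<Rightarrow> ('a \<Rightarrow> 'a \<Rightarrow> 'b) \<Rightarrow> 'b set \<Rightarrow> ('b \<times> 'b) set \<Rightarrow> bool" where
  "pseudoultrametric Z d Q le \<longleftrightarrow>
     (\<forall>x\<in>Z. \<forall>y\<in>Z. d x y \<in> Q) \<and>
     (\<exists>q0\<in>Q. (\<forall>q\<in>Q. (q0, q) \<in> le) \<and>
       (\<forall>x\<in>Z. \<forall>y\<in>Z. d x y = d y x) \<and>
       (\<forall>z\<in>Z. d z z = q0) \<and>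
       (\<forall>z1\<in>Z. \<forall>z2\<in>Z. \<forall>z3\<in>Z. \<exists>p::nat \<Rightarrow> nat. p permutes {1::nat, 2, 3} \<and>
          (let z = (\<lambda>i::nat. if i = 1 then z1 else if i = 2 then z2 else z3) in
            (d (z (p 1)) (z (p 3)), d (z (p 1)) (z (p 2))) \<in> le \<and>
            d (z (p 1)) (z (p 2)) = d (z (p 2)) (z (p 3)))))"

definition comb_similarity ::
  "'a set \<Rightarrow> ('a \<Rightarrow> 'a \<Rightarrow> 'b) \<Rightarrow> 'c set \<Rightarrow> ('c \<Rightarrow> 'c \<Rightarrow> 'd) \<Rightarrow> ('a \<Rightarrow> 'c) \<Rightarrow> bool" where
  "comb_similarity X1 Phi1 X2 Phi2 g \<longleftrightarrow> bij_betw g X1 X2 \<and>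
     (\<exists>f. bij_betw f (rng X2 Phi2) (rng X1 Phi1) \<and>
        (\<forall>x\<in>X1. \<forall>y\<in>X1. Phi1 x y = f (Phi2 (g x) (g y))))"

definition weak_similarity ::
  "'a set \<Rightarrow> ('a \<Rightarrow> 'a \<Rightarrow> 'b) \<Rightarrow> ('b \<times> 'b) set \<Rightarrow>
   'c set \<Rightarrow> ('c \<Rightarrow> 'c \<Rightarrow> 'd) \<Rightarrow> ('d \<times> 'd) set \<Rightarrow> ('a \<Rightarrow> 'c) \<Rightarrow> bool" where
  "weak_similarity X1 Phi1 le1 X2 Phi2 le2 g \<longleftrightarrow> bij_betw g X1 X2 \<and>
     (\<exists>f. bij_betw f (rng X2 Phi2) (rng X1 Phi1) \<and>
        (\<forall>a\<in>rng X2 Phi2. \<forall>b\<in>rng X2 Phi2. (a, b) \<in> le2 \<longleftrightarrow> (f a, f b) \<in> le1) \<and>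
        (\<forall>x\<in>X1. \<forall>y\<in>X1. Phi1 x y = f (Phi2 (g x) (g y))))"

end

theory Submission
  imports Defs
begin

lemma trancl_transfer:
  assumes bij: "bij_betw f R2 R1"
    and sub: "u2 \<subseteq> R2 \<times> R2"
    and fw: "\<And>a b. (a, b) \<in> u2 \<Longrightarrow> (f a, f b) \<in> u1"
    and bw: "\<And>c d. (c, d) \<in> u1 \<Longrightarrow> \<exists>a b. (a, b) \<in> u2 \<and> c = f a \<and> d = f b"
    and ab: "a \<in> R2" "b \<in> R2"
  shows "(a, b) \<in> u2\<^sup>+ \<longleftrightarrow> (f a, f b) \<in> u1\<^sup>+"
proof
  assume "(a, b) \<in> u2\<^sup>+"
  then show "(f a, f b) \<in> u1\<^sup>+"
  proof (induction rule: trancl_induct)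
    case (base y) then show ?case using fw by blast
  next
    case (step y z) then show ?case using fw by (meson trancl.trancl_into_trancl)
  qed
next
  define h where "h = inv_into R2 f"
  have hf: "h (f x) = x" if "x \<in> R2" for x
    using bij that unfolding h_def by (simp add: bij_betw_def)
  have key: "(h c, h d) \<in> u2\<^sup>+" if "(c, d) \<in> u1\<^sup>+" for c d
    using that
  proof (induction rule: trancl_induct)
    case (base y)
    then obtain a' b' where "(a', b') \<in> u2" "c = f a'" "y = f b'" using bw by blast
    moreover have "a' \<in> R2" "b' \<in> R2" using calculation sub by auto
    ultimately show ?case using hf by auto
  next
    case (step y z)
    then obtain a' b' where "(a', b') \<in> u2" "y = f a'" "z = f b'" using bw by blast
    moreover have "a' \<in> R2" "b' \<in> R2" using calculation sub by auto
    ultimately show ?case using hf step by (metis trancl.trancl_into_trancl)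
  qed
  assume "(f a, f b) \<in> u1\<^sup>+"
  from key[OF this] show "(a, b) \<in> u2\<^sup>+" using hf ab by simp
qed

theorem theorem4p4:
  fixes X1 :: "'a set" and Phi1 :: "'a \<Rightarrow> 'a \<Rightarrow> 'b"
    and X2 :: "'c set" and Phi2 :: "'c \<Rightarrow> 'c \<Rightarrow> 'd"
    and g :: "'a \<Rightarrow> 'c"
  assumes "X1 \<noteq> {}" and "X2 \<noteq> {}"
    and "partial_order_on (rng X1 Phi1) (ord_rel X1 Phi1)"
    and "partial_order_on (rng X2 Phi2) (ord_rel X2 Phi2)"
    and "pseudoultrametric X1 Phi1 (rng X1 Phi1) (ord_rel X1 Phi1)"
    and "pseudoultrametric X2 Phi2 (rng X2 Phi2) (ord_rel X2 Phi2)"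
    and "g ` X1 \<subseteq> X2"
  shows "weak_similarity X1 Phi1 (ord_rel X1 Phi1) X2 Phi2 (ord_rel X2 Phi2) g
     \<longleftrightarrow> comb_similarity X1 Phi1 X2 Phi2 g"
proof
  assume "weak_similarity X1 Phi1 (ord_rel X1 Phi1) X2 Phi2 (ord_rel X2 Phi2) g"
  then show "comb_similarity X1 Phi1 X2 Phi2 g"
    unfolding weak_similarity_def comb_similarity_def by blast
next
  assume "comb_similarity X1 Phi1 X2 Phi2 g"
  then obtain f where bg: "bij_betw g X1 X2" and bf: "bij_betw f (rng X2 Phi2) (rng X1 Phi1)"
    and eq: "\<forall>x\<in>X1. \<forall>y\<in>X1. Phi1 x y = f (Phi2 (g x) (g y))"
    unfolding comb_similarity_def by blast
  define R1 where "R1 = rng X1 Phi1"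
  define R2 where "R2 = rng X2 Phi2"
  have injf: "inj_on f R2" using bf R2_def by (simp add: bij_betw_def)
  have inR2: "Phi2 x y \<in> R2" if "x \<in> X2" "y \<in> X2" for x y
    using that unfolding R2_def rng_def by blast
  have inR1: "Phi1 x y \<in> R1" if "x \<in> X1" "y \<in> X1" for x y
    using that unfolding R1_def rng_def by blast
  have surjg: "\<exists>a\<in>X1. x = g a" if "x \<in> X2" for x
    using bg that unfolding bij_betw_def by blast
  have sub: "u_rel X2 Phi2 \<subseteq> R2 \<times> R2" unfolding u_rel_def R2_def by auto
  have fw: "(f a, f b) \<in> u_rel X1 Phi1" if "(a, b) \<in> u_rel X2 Phi2" for a b
  proof -
    from that obtain x1 x2 x3 where x: "x1 \<in> X2" "x2 \<in> X2" "x3 \<in> X2"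
      "a = Phi2 x1 x3" "b = Phi2 x1 x2" "Phi2 x1 x2 = Phi2 x2 x3"
      unfolding u_rel_def by blast
    obtain a1 a2 a3 where a: "a1 \<in> X1" "a2 \<in> X1" "a3 \<in> X1" "x1 = g a1" "x2 = g a2" "x3 = g a3"
      using surjg[OF x(1)] surjg[OF x(2)] surjg[OF x(3)] by blast
    have "f a = Phi1 a1 a3" "f b = Phi1 a1 a2" "Phi1 a1 a2 = Phi1 a2 a3"
      using eq a x by auto
    moreover have "Phi1 a1 a3 \<in> rng X1 Phi1" "Phi1 a1 a2 \<in> rng X1 Phi1"
      using inR1[OF a(1) a(3)] inR1[OF a(1) a(2)] R1_def by auto
    ultimately show ?thesis unfolding u_rel_def mem_Collect_eq case_prod_conv
      apply (intro conjI)
        apply argo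
       apply argo
      apply (rule bexI[of _ a1], rule bexI[of _ a2], rule bexI[of _ a3])
      using a(1-3) by auto
  qed
  have bw: "\<exists>a b. (a, b) \<in> u_rel X2 Phi2 \<and> c = f a \<and> d = f b"
    if "(c, d) \<in> u_rel X1 Phi1" for c d
  proof -
    from that obtain a1 a2 a3 where a: "a1 \<in> X1" "a2 \<in> X1" "a3 \<in> X1"
      "c = Phi1 a1 a3" "d = Phi1 a1 a2" "Phi1 a1 a2 = Phi1 a2 a3"
      unfolding u_rel_def by blast
    have gs: "g a1 \<in> X2" "g a2 \<in> X2" "g a3 \<in> X2" using a assms(7) by auto
    have "f (Phi2 (g a1) (g a2)) = f (Phi2 (g a2) (g a3))" using eq a(1-3,6) by simp
    then have e: "Phi2 (g a1) (g a2) = Phi2 (g a2) (g a3)"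
      using injf inR2[OF gs(1) gs(2)] inR2[OF gs(2) gs(3)] unfolding inj_on_def by blast
    have "(Phi2 (g a1) (g a3), Phi2 (g a1) (g a2)) \<in> u_rel X2 Phi2"
      unfolding u_rel_def using gs e inR2[OF gs(1) gs(3)] inR2[OF gs(1) gs(2)] R2_def by blast
    moreover have "c = f (Phi2 (g a1) (g a3))" "d = f (Phi2 (g a1) (g a2))"
      using eq a(1-5) by auto
    ultimately show ?thesis by blast
  qed
  have ord: "(a, b) \<in> ord_rel X2 Phi2 \<longleftrightarrow> (f a, f b) \<in> ord_rel X1 Phi1"
    if ab: "a \<in> R2" "b \<in> R2" for a b
  proof -
    have T: "(a, b) \<in> (u_rel X2 Phi2)\<^sup>+ \<longleftrightarrow> (f a, f b) \<in> (u_rel X1 Phi1)\<^sup>+"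
      using trancl_transfer[OF bf[folded R2_def R1_def] sub fw bw ab] by blast
    have fa: "f a \<in> R1" "f b \<in> R1" using bf ab R1_def R2_def bij_betwE by blast+
    have I: "(a, b) \<in> Id_on R2 \<longleftrightarrow> (f a, f b) \<in> Id_on R1"
      using injf ab fa by (auto simp: Id_on_def inj_on_def)
    show ?thesis unfolding ord_rel_def Un_iff using T I unfolding R1_def R2_def by simp
  qed
  show "weak_similarity X1 Phi1 (ord_rel X1 Phi1) X2 Phi2 (ord_rel X2 Phi2) g"
    unfolding weak_similarity_def using bg bf eq ord R2_def by blast
qed

end
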